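(* Let $X$ be a rank-one subshift, associated to a rank-one transformation on a finite measure space, with cut sequence $(r_n)$ and spacer sequence $(s_{n,i})$ such that $s_{n,r_n}=0$ for all sufficiently large $n$. If for infinitely many $n$ the set $\{s_{m,i}: m\ge n,\ 0\le i<r_m\}$ contains at least three distinct values, then $\limsup_{q\to\infty} p(q)/q\ge 2$.
   Context: Rank-one transformations: given a cut sequence $(r_n)_{n\ge1}$ of positive integers and a spacer sequence $(s_{n,i})_{n\ge1,0\le i\le r_n}$ of nonnegative integers, the rank-one transformation is built by cutting and stacking ($C_1=[0,1)$; $C_{n+1}$ obtained by cutting $C_n$ into $r_n+1$ equal-width subcolumns, adding $s_{n,i}$ spacers atop subcolumn $i$, stacking left to right); the space has finite measure iff $\sum_n\frac{1}{r_nh_n}\sum_i s_{n,i}<\infty$. The associated subshift is given by $B_1=0$, $B_{n+1}=B_n1^{s_{n,0}}\cdots B_n1^{s_{n,r_n}}$ ($h_n=$ length of $B_n$): all $x\in\{0,1\}^{\mathbb Z}$ whose finite subwords are subwords of some $B_n$; $p(q)$ is the number of distinct words of length $q$ occurring in it. *)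

theory Defs
  imports Complex_Main "HOL-Library.Sublist" "HOL-Library.Extended_Real" "HOL-Library.Liminf_Limsup"
begin

text \<open>Cut sequence r (r n for n \<ge> 1), spacer sequence s n i (n \<ge> 1, 0 \<le> i \<le> r n).
  rk_word_aux r s k is the word B_(k+1).\<close>
primrec rk_word_aux :: "(nat \<Rightarrow> nat) \<Rightarrow> (nat \<Rightarrow> nat \<Rightarrow> nat) \<Rightarrow> nat \<Rightarrow> nat list" where
  "rk_word_aux r s 0 = [0]"
| "rk_word_aux r s (Suc k) =
     concat (map (\<lambda>i. rk_word_aux r s k @ replicate (s (Suc k) i) 1) [0..<Suc (r (Suc k))])"

definition rk_word :: "(nat \<Rightarrow> nat) \<Rightarrow> (nat \<Rightarrow> nat \<Rightarrow> nat) \<Rightarrow> nat \<Rightarrow> nat list" where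
  "rk_word r s n = rk_word_aux r s (n - 1)"

definition rk_height :: "(nat \<Rightarrow> nat) \<Rightarrow> (nat \<Rightarrow> nat \<Rightarrow> nat) \<Rightarrow> nat \<Rightarrow> nat" where
  "rk_height r s n = length (rk_word r s n)"

definition window :: "(int \<Rightarrow> nat) \<Rightarrow> int \<Rightarrow> nat \<Rightarrow> nat list" where
  "window x i q = map (\<lambda>j. x (i + int j)) [0..<q]"

definition rk_subshift :: "(nat \<Rightarrow> nat) \<Rightarrow> (nat \<Rightarrow> nat \<Rightarrow> nat) \<Rightarrow> (int \<Rightarrow> nat) set" where
  "rk_subshift r s = {x. (\<forall>k. x k \<in> {0, 1}) \<and>
      (\<forall>i q. \<exists>n\<ge>1. sublist (window x i q) (rk_word r s n))}"

definition complexity :: "(nat \<Rightarrow> nat) \<Rightarrow> (nat \<Rightarrow> nat \<Rightarrow> nat) \<Rightarrow> nat \<Rightarrow> nat" where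
  "complexity r s q = card {w. length w = q \<and> (\<exists>x\<in>rk_subshift r s. \<exists>i. w = window x i q)}"

definition rk_finite_measure :: "(nat \<Rightarrow> nat) \<Rightarrow> (nat \<Rightarrow> nat \<Rightarrow> nat) \<Rightarrow> bool" where
  "rk_finite_measure r s \<longleftrightarrow>
     summable (\<lambda>n. if n \<ge> 1 then real (\<Sum>i\<le>r n. s n i) / (real (r n) * real (rk_height r s n)) else 0)"

end

theory Submission imports Defs "HOL-Library.Infinite_Set" begin

locale rk =
  fixes r :: "nat \<Rightarrow> nat" and s :: "nat \<Rightarrow> nat \<Rightarrow> nat"
  assumes cut_pos: "\<forall>n\<ge>1. r n \<ge> 1"
begin

abbreviation W where "W \<equiv> rk_word r s"
abbreviation h where "h \<equiv> rk_height r s"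

lemma W_Suc: "n \<ge> 1 \<Longrightarrow> W (Suc n) = concat (map (\<lambda>i. W n @ replicate (s n i) 1) [0..<Suc (r n)])"
  by (cases n) (auto simp: rk_word_def)

lemma aux_start: "\<exists>v. rk_word_aux r s k = 0 # v"
proof (induction k)
  case 0 then show ?case by simp
next
  case (Suc k)
  then obtain v where "rk_word_aux r s k = 0 # v" by blast
  then show ?case by (simp add: upt_conv_Cons del: upt_Suc)
qed

lemma W_start: "\<exists>v. W n = 0 # v"
  unfolding rk_word_def by (rule aux_start)

lemma aux_set: "set (rk_word_aux r s k) \<subseteq> {0,1}"
  by (induction k) auto

lemma W_set: "set (W n) \<subseteq> {0,1}"
  unfolding rk_word_def by (rule aux_set)

lemma h_pos: "h n \<ge> 1"
  using W_start[of n] by (auto simp: rk_height_def)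

lemma W_junction:
  assumes "n \<ge> 1" "i < r n"
  shows "\<exists>C. W (Suc n) = concat (map (\<lambda>i. W n @ replicate (s n i) 1) [0..<i]) @ (W n @ replicate (s n i) 1) @ (W n @ replicate (s n (Suc i)) 1) @ C"
proof -
  have "[0..<Suc (r n)] = [0..<i] @ [i..<Suc (r n)]"
    using assms upt_add_eq_append[of 0 i "Suc (r n) - i"] by (simp del: upt_Suc)
  also have "[i..<Suc (r n)] = i # Suc i # [Suc (Suc i)..<Suc (r n)]"
    using assms by (simp add: upt_conv_Cons del: upt_Suc)
  finally show ?thesis using assms by (simp add: W_Suc del: upt_Suc)
qed

lemma W_first:
  assumes "n \<ge> 1"
  shows "\<exists>C. W (Suc n) = W n @ replicate (s n 0) 1 @ W n @ C"
proof -
  have "r n \<ge> 1" using cut_pos assms by auto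
  then show ?thesis using W_junction[OF assms, of 0] by auto
qed

lemma W_sub:
  assumes "n \<ge> 1" "i < r n"
  shows "sublist (W n @ replicate (s n i) 1 @ W n) (W (Suc n))"
proof -
  obtain C where "W (Suc n) = concat (map (\<lambda>i. W n @ replicate (s n i) 1) [0..<i]) @ (W n @ replicate (s n i) 1 @ W n) @ (replicate (s n (Suc i)) 1 @ C)"
    using W_junction[OF assms] by auto
  then show ?thesis by (metis sublist_appendI)
qed

lemma W_prefix1: "n \<ge> 1 \<Longrightarrow> prefix (W n) (W (Suc n))"
  using W_first by (metis append.assoc prefixI)

lemma W_len: "n \<ge> 1 \<Longrightarrow> h (Suc n) \<ge> 2 * h n + s n 0"
  using W_first[of n] unfolding rk_height_def by auto

lemma W_suffix1:
  assumes "n \<ge> 1" "s n (r n) = 0"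
  shows "suffix (W n) (W (Suc n))"
proof -
  have "[0..<Suc (r n)] = [0..<r n] @ [r n]" by simp
  then show ?thesis using assms by (simp add: W_Suc suffix_def del: upt_Suc)
qed

lemma W_prefix: assumes "1 \<le> n" "n \<le> m" shows "prefix (W n) (W m)"
  using assms(2) proof (induction m rule: dec_induct)
  case base then show ?case by simp
next
  case (step m) then show ?case using W_prefix1[of m] assms(1) by (meson order.trans prefix_order.order_trans)
qed

lemma W_suffix:
  assumes "\<forall>k\<ge>N. s k (r k) = 0" "1 \<le> n" "N \<le> n" "n \<le> m"
  shows "suffix (W n) (W m)"
  using assms(4) proof (induction m rule: dec_induct)
  case base then show ?case by simp
next
  case (step m) then show ?case using W_suffix1[of m] assms
    by (meson order.trans suffix_order.order_trans)
qed


definition d :: "nat \<Rightarrow> nat" where "d k = (if odd k then h k + s k 0 else 0)"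

lemma d_nth: assumes "k \<ge> 1" "p < h k"
  shows "p + d k < h (Suc k) \<and> W (Suc k) ! (p + d k) = W k ! p"
proof -
  obtain C where C: "W (Suc k) = W k @ replicate (s k 0) 1 @ W k @ C" using W_first assms by blast
  show ?thesis
  proof (cases "odd k")
    case True
    then have "d k = length (W k) + s k 0" by (simp add: d_def rk_height_def)
    then show ?thesis using assms C by (simp add: rk_height_def nth_append)
  next
    case False
    then show ?thesis using assms C by (simp add: rk_height_def nth_append d_def)
  qed
qed

context fixes n0 :: nat assumes n0: "n0 \<ge> 1"
begin

definition tt :: "nat \<Rightarrow> nat" where "tt k = (\<Sum>j\<in>{n0..<k}. d j)"

lemma tt_n0: "tt n0 = 0" by (simp add: tt_def)

lemma tt_Suc: "n0 \<le> k \<Longrightarrow> tt (Suc k) = tt k + d k"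
  by (simp add: tt_def)

lemma tt_lt: assumes "n0 \<le> k" shows "tt k < h k"
  using assms
proof (induction k rule: dec_induct)
  case base then show ?case using tt_n0 h_pos[of n0] by simp
next
  case (step k)
  have k1: "k \<ge> 1" using step n0 by simp
  have "tt (Suc k) = tt k + d k" using tt_Suc step by simp
  moreover have "h (Suc k) \<ge> 2 * h k + s k 0" using W_len k1 by simp
  ultimately show ?case using step by (auto simp: d_def)
qed

lemma tt_step: assumes "n0 \<le> k"
  shows "tt k \<le> tt (Suc k)" "h k - tt k \<le> h (Suc k) - tt (Suc k)"
    "odd k \<Longrightarrow> tt k + 1 \<le> tt (Suc k)" "even k \<Longrightarrow> h k - tt k + 1 \<le> h (Suc k) - tt (Suc k)"
proof -
  have k1: "k \<ge> 1" using assms n0 by simp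
  have e: "tt (Suc k) = tt k + d k" using tt_Suc assms by simp
  have l: "h (Suc k) \<ge> 2 * h k + s k 0" using W_len k1 by simp
  have lt: "tt k < h k" using tt_lt assms by simp
  have hp: "h k \<ge> 1" by (rule h_pos)
  show "tt k \<le> tt (Suc k)" using e by simp
  show "h k - tt k \<le> h (Suc k) - tt (Suc k)" using e l lt by (auto simp: d_def)
  show "odd k \<Longrightarrow> tt k + 1 \<le> tt (Suc k)" using e hp by (auto simp: d_def)
  show "even k \<Longrightarrow> h k - tt k + 1 \<le> h (Suc k) - tt (Suc k)" using e l lt hp by (auto simp: d_def)
qed

lemma tt_grow: "m \<le> tt (n0 + 2*m) \<and> m + 1 \<le> h (n0 + 2*m) - tt (n0 + 2*m)"
proof (induction m)
  case 0 then show ?case using tt_n0 h_pos[of n0] by simp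
next
  case (Suc m)
  define k where "k = n0 + 2*m"
  have a: "n0 \<le> k" "n0 \<le> Suc k" by (auto simp: k_def)
  have eq: "n0 + 2 * Suc m = Suc (Suc k)" by (simp add: k_def)
  show ?case
  proof (cases "odd k")
    case True
    then have "even (Suc k)" by simp
    then show ?thesis unfolding eq using Suc tt_step[OF a(1)] tt_step[OF a(2)] True
      unfolding k_def[symmetric] by fastforce
  next
    case False
    then have "odd (Suc k)" by simp
    then show ?thesis unfolding eq using Suc tt_step[OF a(1)] tt_step[OF a(2)] False
      unfolding k_def[symmetric] by fastforce
  qed
qed

lemma tt_mono: assumes "n0 \<le> k" "k \<le> k'" shows "tt k \<le> tt k'" "h k - tt k \<le> h k' - tt k'"
  using assms(2)
proof (induction k' rule: dec_induct)
  case base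
  { case 1 then show ?case by simp }
  { case 2 then show ?case by simp }
next
  case (step k')
  have "n0 \<le> k'" using assms step by simp
  note t = tt_step[OF this]
  { case 1 then show ?case using step t by simp }
  { case 2 then show ?case using step t by simp }
qed

lemma consist:
  assumes "n0 \<le> k" "k \<le> k'" "0 \<le> j + int (tt k)" "j + int (tt k) < int (h k)"
  shows "j + int (tt k') < int (h k') \<and> W k' ! nat (j + int (tt k')) = W k ! nat (j + int (tt k))"
  using assms(2)
proof (induction k' rule: dec_induct)
  case base then show ?case using assms by simp
next
  case (step m)
  have k0: "n0 \<le> m" using assms step by simp
  have k1: "m \<ge> 1" using k0 n0 by simp
  have "tt k \<le> tt m" using tt_mono assms step by simp
  then have nn: "0 \<le> j + int (tt m)" using assms by simp
  define p where "p = nat (j + int (tt m))"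
  have pl: "p < h m" using step nn by (simp add: p_def nat_less_iff)
  have eq: "j + int (tt (Suc m)) = int (p + d m)" using tt_Suc[OF k0] nn by (simp add: p_def)
  then have e2: "nat (j + int (tt (Suc m))) = p + d m" by simp
  have dn: "p + d m < h (Suc m)" "W (Suc m) ! (p + d m) = W m ! p" using d_nth[OF k1 pl] by auto
  show ?case
  proof
    show "j + int (tt (Suc m)) < int (h (Suc m))" unfolding eq using dn(1) by simp
    show "W (Suc m) ! nat (j + int (tt (Suc m))) = W k ! nat (j + int (tt k))"
      unfolding e2 dn(2) using step.IH by (simp add: p_def)
  qed
qed

definition KK :: "int \<Rightarrow> nat" where "KK j = n0 + 2 * (nat \<bar>j\<bar> + 1)"

definition xx :: "int \<Rightarrow> nat" where "xx j = W (KK j) ! nat (j + int (tt (KK j)))"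

lemma KK_range: "0 \<le> j + int (tt (KK j)) \<and> j + int (tt (KK j)) < int (h (KK j))"
proof -
  have "nat \<bar>j\<bar> + 1 \<le> tt (KK j) \<and> nat \<bar>j\<bar> + 1 + 1 \<le> h (KK j) - tt (KK j)"
    using tt_grow[of "nat \<bar>j\<bar> + 1"] by (simp add: KK_def)
  then show ?thesis by linarith
qed

lemma xx_eq:
  assumes "n0 \<le> k" "0 \<le> j + int (tt k)" "j + int (tt k) < int (h k)"
  shows "xx j = W k ! nat (j + int (tt k))"
proof -
  define M where "M = max k (KK j)"
  have "n0 \<le> KK j" by (simp add: KK_def)
  then have "W M ! nat (j + int (tt M)) = W (KK j) ! nat (j + int (tt (KK j)))"
    using consist[of "KK j" M j] KK_range by (simp add: M_def)
  moreover have "W M ! nat (j + int (tt M)) = W k ! nat (j + int (tt k))"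
    using consist[of k M j] assms by (simp add: M_def)
  ultimately show ?thesis by (simp add: xx_def)
qed

lemma take_drop_map: "p + q \<le> length w \<Longrightarrow> take q (drop p w) = map (\<lambda>l. w ! (p + l)) [0..<q]"
  by (rule nth_equalityI) auto

lemma xx_window: "sublist (window xx i q) (W (n0 + 2 * (nat \<bar>i\<bar> + q + 1)))"
proof -
  define k where "k = n0 + 2 * (nat \<bar>i\<bar> + q + 1)"
  have g: "nat \<bar>i\<bar> + q + 1 \<le> tt k \<and> nat \<bar>i\<bar> + q + 1 + 1 \<le> h k - tt k"
    using tt_grow[of "nat \<bar>i\<bar> + q + 1"] by (simp add: k_def)
  have tk: "tt k < h k" using tt_lt by (simp add: k_def)
  have ai: "int (nat \<bar>i\<bar>) = \<bar>i\<bar>" by simp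
  have g2: "\<bar>i\<bar> + int q + 1 \<le> int (tt k)" "\<bar>i\<bar> + int q + 2 + int (tt k) \<le> int (h k)"
    using g tk ai by linarith+
  define p where "p = nat (i + int (tt k))"
  have pq: "p + q \<le> length (W k)" using g unfolding p_def rk_height_def by linarith
  have "window xx i q = map (\<lambda>l. W k ! (p + l)) [0..<q]"
  proof (rule nth_equalityI)
    fix l assume "l < length (window xx i q)"
    then have l: "l < q" by (simp add: window_def)
    have "xx (i + int l) = W k ! nat (i + int l + int (tt k))"
      apply (rule xx_eq) apply (simp add: k_def)
      using g2 l abs_ge_self[of i] abs_ge_minus_self[of i] by linarith+
    moreover have "nat (i + int l + int (tt k)) = p + l"
      using g2 l abs_ge_minus_self[of i] unfolding p_def by (simp add: nat_add_distrib[symmetric])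
    ultimately show "window xx i q ! l = map (\<lambda>l. W k ! (p + l)) [0..<q] ! l"
      using l by (simp add: window_def)
  qed (simp add: window_def)
  also have "\<dots> = take q (drop p (W k))" using take_drop_map[OF pq] by simp
  finally show ?thesis unfolding k_def[symmetric]
    by (metis sublist_drop sublist_order.order_trans sublist_take)
qed

lemma xx_in: "xx \<in> rk_subshift r s"
proof -
  have "xx j \<in> {0,1}" for j
  proof -
    have "nat (j + int (tt (KK j))) < length (W (KK j))" using KK_range[of j] by (simp add: rk_height_def nat_less_iff)
    then have "xx j \<in> set (W (KK j))" unfolding xx_def by (rule nth_mem)
    then show ?thesis using W_set[of "KK j"] by auto
  qed
  moreover have "\<exists>n\<ge>1. sublist (window xx i q) (W n)" for i q
    using xx_window[of i q] n0 by (intro exI[of _ "n0 + 2 * (nat \<bar>i\<bar> + q + 1)"]) auto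
  ultimately show ?thesis by (auto simp: rk_subshift_def)
qed

lemma xx_origin:
  assumes "p + q \<le> h n0"
  shows "window xx (int p) q = take q (drop p (W n0))"
proof -
  have "window xx (int p) q = map (\<lambda>l. W n0 ! (p + l)) [0..<q]"
  proof (rule nth_equalityI)
    fix l assume "l < length (window xx (int p) q)"
    then have l: "l < q" by (simp add: window_def)
    have "xx (int p + int l) = W n0 ! nat (int p + int l + int (tt n0))"
      by (rule xx_eq) (use assms l tt_n0 in auto)
    then show "window xx (int p) q ! l = map (\<lambda>l. W n0 ! (p + l)) [0..<q] ! l"
      using l tt_n0 by (simp add: window_def nat_add_distrib)
  qed (simp add: window_def)
  then show ?thesis using take_drop_map[of p q "W n0"] assms by (simp add: rk_height_def)
qed

end

lemma lang_window:
  assumes "n \<ge> 1" "sublist w (W n)"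
  shows "\<exists>x\<in>rk_subshift r s. \<exists>i. w = window x i (length w)"
proof -
  obtain u v where uv: "W n = u @ w @ v" using assms(2) by (auto simp: sublist_def)
  have "length u + length w \<le> h n" using uv by (simp add: rk_height_def)
  then have "window (xx n) (int (length u)) (length w) = take (length w) (drop (length u) (W n))"
    using xx_origin[OF assms(1)] by blast
  also have "\<dots> = w" using uv by simp
  finally show ?thesis using xx_in[OF assms(1)] by metis
qed


definition Lang :: "nat list \<Rightarrow> bool" where "Lang w \<longleftrightarrow> (\<exists>m\<ge>1. sublist w (W m))"
definition Lq :: "nat \<Rightarrow> nat list set" where "Lq q = {w. length w = q \<and> Lang w}"

lemma Lang_sub: "Lang w \<Longrightarrow> sublist v w \<Longrightarrow> Lang v"
  unfolding Lang_def by (meson sublist_order.order_trans)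

lemma Lang_set: "Lang w \<Longrightarrow> set w \<subseteq> {0,1}"
  unfolding Lang_def using W_set set_mono_sublist by blast

lemma Lq_finite: "finite (Lq q)"
proof -
  have "Lq q \<subseteq> {w. set w \<subseteq> {0,1} \<and> length w = q}" using Lang_set by (auto simp: Lq_def)
  moreover have "finite {w. set w \<subseteq> {0::nat,1} \<and> length w = q}"
    by (rule finite_lists_length_eq) simp
  ultimately show ?thesis by (rule finite_subset)
qed

lemma Lq_le_complexity: "card (Lq q) \<le> complexity r s q"
proof -
  let ?C = "{w. length w = q \<and> (\<exists>x\<in>rk_subshift r s. \<exists>i. w = window x i q)}"
  have "?C \<subseteq> {w. set w \<subseteq> {0,1} \<and> length w = q}"
  proof
    fix w assume "w \<in> ?C"
    then obtain x i where x: "x \<in> rk_subshift r s" "w = window x i q" "length w = q" by auto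
    have xk: "\<forall>k. x k \<in> {0,1}" using x(1) by (simp add: rk_subshift_def)
    have "set w \<subseteq> {0,1}"
    proof
      fix y assume "y \<in> set w"
      then obtain j where "y = x (i + int j)" using x(2) by (auto simp: window_def)
      then show "y \<in> {0,1}" using xk[rule_format, of "i + int j"] by simp
    qed
    then show "w \<in> {w. set w \<subseteq> {0,1} \<and> length w = q}" using x(3) by blast
  qed
  moreover have "finite {w. set w \<subseteq> {0::nat,1} \<and> length w = q}"
    by (rule finite_lists_length_eq) simp
  ultimately have fin: "finite ?C" by (rule finite_subset)
  have "Lq q \<subseteq> ?C"
  proof
    fix w assume "w \<in> Lq q"
    then obtain m where m: "m \<ge> 1" "sublist w (W m)" "length w = q" by (auto simp: Lq_def Lang_def)
    then show "w \<in> ?C" using lang_window[OF m(1,2)] by auto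
  qed
  then show ?thesis unfolding complexity_def using fin by (rule card_mono[rotated])
qed

lemma Lang_ext: assumes "Lang w" shows "\<exists>x. Lang (w @ [x])"
proof -
  obtain m where m: "m \<ge> 1" "sublist w (W m)" using assms by (auto simp: Lang_def)
  obtain u v where uv: "W m = u @ w @ v" using m(2) by (auto simp: sublist_def)
  obtain C where C: "W (Suc m) = W m @ replicate (s m 0) 1 @ W m @ C" using W_first m(1) by blast
  obtain z where z: "W m = 0 # z" using W_start by blast
  define y where "y = v @ replicate (s m 0) 1 @ W m @ C"
  have "y \<noteq> []" using z by (simp add: y_def)
  then obtain x y' where y: "y = x # y'" by (cases y) auto
  have "W (Suc m) = u @ (w @ [x]) @ y'" using C uv y by (simp add: y_def)
  then have "sublist (w @ [x]) (W (Suc m))" by (metis sublist_appendI)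
  then show ?thesis unfolding Lang_def by (intro exI[of _ x] exI[of _ "Suc m"]) simp
qed

lemma count_step:
  assumes R: "R \<subseteq> Lq q" "\<forall>w\<in>R. Lang (w @ [0]) \<and> Lang (w @ [1])"
  shows "card (Lq q) + card R \<le> card (Lq (Suc q))"
proof -
  define f where "f w = w @ [if w \<in> R then 0 else (SOME x. Lang (w @ [x]))]" for w
  define g where "g w = w @ [1::nat]" for w
  have fin: "finite R" using R(1) Lq_finite finite_subset by blast
  have f_in: "f ` Lq q \<subseteq> Lq (Suc q)"
  proof
    fix y assume "y \<in> f ` Lq q"
    then obtain w where w: "w \<in> Lq q" "y = f w" by auto
    have "Lang (f w)"
    proof (cases "w \<in> R")
      case True then show ?thesis using R by (simp add: f_def)
    next
      case False
      have "Lang (w @ [SOME x. Lang (w @ [x])])"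
        using Lang_ext[of w] w(1) by (auto simp: Lq_def intro: someI_ex)
      then show ?thesis using False by (simp add: f_def)
    qed
    then show "y \<in> Lq (Suc q)" using w by (simp add: Lq_def f_def)
  qed
  have g_in: "g ` R \<subseteq> Lq (Suc q)" using R by (auto simp: Lq_def g_def)
  have disj: "f ` Lq q \<inter> g ` R = {}"
  proof (rule ccontr)
    assume "f ` Lq q \<inter> g ` R \<noteq> {}"
    then obtain w w' where "w \<in> Lq q" "w' \<in> R" "f w = g w'" by auto
    then show False by (auto simp: f_def g_def split: if_splits)
  qed
  have inj_f: "inj_on f (Lq q)" by (rule inj_onI) (auto simp: f_def)
  have inj_g: "inj_on g R" by (rule inj_onI) (auto simp: g_def)
  have "card (Lq q) + card R = card (f ` Lq q) + card (g ` R)"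
    using card_image[OF inj_f] card_image[OF inj_g] by simp
  also have "\<dots> = card (f ` Lq q \<union> g ` R)"
    using disj fin Lq_finite by (simp add: card_Un_disjoint)
  also have "\<dots> \<le> card (Lq (Suc q))"
    using f_in g_in Lq_finite by (intro card_mono) auto
  finally show ?thesis .
qed

lemma count_total:
  assumes "\<And>q. q \<in> G \<Longrightarrow> \<exists>R. R \<subseteq> Lq q \<and> card R = 2 \<and> (\<forall>w\<in>R. Lang (w @ [0]) \<and> Lang (w @ [1]))"
  shows "2 * card {i\<in>G. i < q} \<le> card (Lq q)"
proof (induction q)
  case 0 then show ?case by simp
next
  case (Suc q)
  show ?case
  proof (cases "q \<in> G")
    case True
    then obtain R where "R \<subseteq> Lq q" "card R = 2" "\<forall>w\<in>R. Lang (w @ [0]) \<and> Lang (w @ [1])"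
      using assms by blast
    then have "card (Lq q) + 2 \<le> card (Lq (Suc q))" using count_step by metis
    moreover have "{i\<in>G. i < Suc q} = insert q {i\<in>G. i < q}" using True by auto
    ultimately show ?thesis using Suc by simp
  next
    case False
    obtain R where "R = ({}::nat list set)" by simp
    then have "card (Lq q) \<le> card (Lq (Suc q))" using count_step[of "{}" q] by simp
    moreover have "{i\<in>G. i < Suc q} = {i\<in>G. i < q}" using False less_Suc_eq by auto
    ultimately show ?thesis using Suc by simp
  qed
qed


lemma ends0: "0 \<in> set w \<Longrightarrow> set w \<subseteq> {0,1} \<Longrightarrow> \<exists>P e. w = P @ [0::nat] @ replicate e 1"
proof (induction w rule: rev_induct)
  case Nil then show ?case by simp
next
  case (snoc a w)
  show ?case
  proof (cases "a = 0")
    case True then show ?thesis by (intro exI[of _ w] exI[of _ 0]) simp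
  next
    case False
    then have "a = 1" "0 \<in> set w" "set w \<subseteq> {0,1}" using snoc.prems by auto
    then obtain P e where "w = P @ [0] @ replicate e 1" using snoc.IH by blast
    then have "w @ [a] = P @ [0] @ replicate (Suc e) 1"
      using \<open>a = 1\<close> by (simp add: replicate_append_same)
    then show ?thesis by blast
  qed
qed

lemma rep_neq: "replicate i (1::nat) @ 0 # u = replicate j 1 @ 0 # v \<Longrightarrow> i = j"
proof (induction i arbitrary: j)
  case 0 then show ?case by (cases j) auto
next
  case (Suc i) then show ?case by (cases j) auto
qed

context fixes N e :: nat
  assumes N1: "N \<ge> 1" and lastz: "\<forall>k\<ge>N. s k (r k) = 0"
    and Nend: "\<exists>P. W N = P @ [0] @ replicate e 1"
begin

definition S :: "nat \<Rightarrow> nat set" where "S n = {s m i | m i. m \<ge> n \<and> i < r m}"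

lemma W_end: assumes "N \<le> n" shows "\<exists>P. W n = P @ [0] @ replicate e 1"
proof -
  have "suffix (W N) (W n)" using W_suffix[OF lastz N1 order.refl assms] .
  then obtain Q where "W n = Q @ W N" by (auto simp: suffix_def)
  then show ?thesis using Nend by auto
qed

lemma drop_end: assumes "N \<le> n" "e < l" "l \<le> h n"
  shows "\<exists>P. drop (h n - l) (W n) = P @ [0] @ replicate e 1"
proof -
  obtain P where P: "W n = P @ [0] @ replicate e 1" using W_end assms by blast
  then have lp: "length P = h n - e - 1" by (simp add: rk_height_def)
  have "h n - l \<le> length P" using lp assms by simp
  then show ?thesis unfolding P by (simp add: drop_append)
qed

lemma Key: assumes "N \<le> n" "k \<in> S n" "l \<le> h n"
  shows "Lang (drop (h n - l) (W n) @ replicate k 1 @ [0])"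
proof -
  obtain m i where mi: "k = s m i" "n \<le> m" "i < r m" using assms(2) by (auto simp: S_def)
  have m1: "m \<ge> 1" using mi N1 assms by simp
  have sub: "sublist (W m @ replicate k 1 @ W m) (W (Suc m))" using W_sub[OF m1 mi(3)] mi by simp
  have "suffix (W n) (W m)" using W_suffix[OF lastz _ assms(1) mi(2)] N1 assms by simp
  then have "suffix (drop (h n - l) (W n)) (W m)" by (meson suffix_drop suffix_order.order_trans)
  then obtain p where p: "W m = p @ drop (h n - l) (W n)" by (auto simp: suffix_def)
  obtain z where z: "W m = 0 # z" using W_start by blast
  have "W m @ replicate k 1 @ W m = (p @ drop (h n - l) (W n)) @ replicate k 1 @ (0 # z)"
    using p z by metis
  then have "W m @ replicate k 1 @ W m = p @ (drop (h n - l) (W n) @ replicate k 1 @ [0]) @ z"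
    by simp
  then have "sublist (drop (h n - l) (W n) @ replicate k 1 @ [0]) (W (Suc m))"
    using sub by (metis sublist_appendI sublist_order.order_trans)
  then show ?thesis unfolding Lang_def by (intro exI[of _ "Suc m"]) simp
qed

lemma Key1: assumes "N \<le> n" "k \<in> S n" "l \<le> h n" "j \<le> k"
  shows "Lang (drop (h n - l) (W n) @ replicate j 1)"
proof -
  have "replicate k (1::nat) = replicate j 1 @ replicate (k - j) 1"
    using assms(4) by (metis le_add_diff_inverse replicate_add)
  then have "drop (h n - l) (W n) @ replicate k 1 @ [0] = (drop (h n - l) (W n) @ replicate j 1) @ (replicate (k - j) 1 @ [0])"
    by simp
  then show ?thesis using Key[OF assms(1-3)] by (metis Lang_sub sublist_append_rightI)
qed

lemma Key2: assumes "N \<le> n" "k \<in> S n" "j \<le> k"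
  shows "Lang (replicate j 1 @ [0])"
proof -
  have "replicate k (1::nat) = replicate (k - j) 1 @ replicate j 1"
    using assms(3) by (metis le_add_diff_inverse2 replicate_add)
  then have "drop (h n - 0) (W n) @ replicate k 1 @ [0] = replicate (k - j) 1 @ (replicate j 1 @ [0])"
    by (simp add: rk_height_def)
  then show ?thesis using Key[OF assms(1,2), of 0] by (metis Lang_sub sublist_append_leftI zero_le)
qed

lemma RSword: assumes "N \<le> n" "k \<in> S n" "k' \<in> S n" "k < k'" "l \<le> h n"
  shows "drop (h n - l) (W n) @ replicate k 1 \<in> Lq (l + k)"
    "Lang ((drop (h n - l) (W n) @ replicate k 1) @ [0])"
    "Lang ((drop (h n - l) (W n) @ replicate k 1) @ [1])"
proof -
  show 0: "Lang ((drop (h n - l) (W n) @ replicate k 1) @ [0])" using Key[OF assms(1,2,5)] by simp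
  show "Lang ((drop (h n - l) (W n) @ replicate k 1) @ [1])"
    using Key1[OF assms(1,3,5), of "Suc k"] assms(4) by (simp add: replicate_append_same[symmetric])
  have "Lang (drop (h n - l) (W n) @ replicate k 1)" using 0 by (metis Lang_sub sublist_append_rightI)
  then show "drop (h n - l) (W n) @ replicate k 1 \<in> Lq (l + k)"
    using assms(5) by (simp add: Lq_def rk_height_def)
qed

lemma RSones: assumes "N \<le> n" "c \<in> S n" "q < c"
  shows "replicate q 1 \<in> Lq q" "Lang (replicate q 1 @ [0])" "Lang (replicate q 1 @ [1])"
proof -
  show 0: "Lang (replicate q 1 @ [0])" using Key2[OF assms(1,2)] assms(3) by simp
  have "Lang (replicate (Suc q) 1 @ [0])" using Key2[OF assms(1,2), of "Suc q"] assms(3) by simp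
  then show "Lang (replicate q 1 @ [1])"
    by (metis Lang_sub replicate_Suc replicate_append_same sublist_append_rightI)
  show "replicate q 1 \<in> Lq q" using 0 by (simp add: Lq_def) (metis Lang_sub sublist_append_rightI)
qed

lemma main_count:
  assumes n: "N \<le> n" and abc: "a \<in> S n" "b \<in> S n" "c \<in> S n" "a < b" "b < c"
  shows "2 * (h n - e - 1 - e) \<le> card (Lq (a + h n))"
proof -
  define G where "G = {a+e+1..<a+h n} - {c..<b+e+1}"
  have "\<exists>R. R \<subseteq> Lq q \<and> card R = 2 \<and> (\<forall>w\<in>R. Lang (w @ [0]) \<and> Lang (w @ [1]))" if q: "q \<in> G" for q
  proof -
    have q1: "a + e + 1 \<le> q" "q < a + h n" "q < c \<or> b + e + 1 \<le> q" using q by (auto simp: G_def)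
    define W1 where "W1 = drop (h n - (q - a)) (W n) @ replicate a 1"
    have l1: "q - a \<le> h n" using q1 by simp
    have w1: "W1 \<in> Lq q" "Lang (W1 @ [0])" "Lang (W1 @ [1])"
      using RSword[OF n abc(1,2,4) l1] q1 unfolding W1_def by auto
    have "e < q - a" using q1 by simp
    then obtain P1 where P1: "drop (h n - (q - a)) (W n) = P1 @ [0] @ replicate e 1"
      using drop_end[OF n _ l1] by blast
    have f1: "W1 = P1 @ [0] @ replicate (e + a) 1" by (simp add: W1_def P1 replicate_add)
    show ?thesis
    proof (cases "q < c")
      case True
      define W2 where "W2 = replicate q (1::nat)"
      have w2: "W2 \<in> Lq q" "Lang (W2 @ [0])" "Lang (W2 @ [1])"
        using RSones[OF n abc(3) True] unfolding W2_def by auto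
      have "0 \<in> set W1" using f1 by simp
      moreover have "0 \<notin> set W2" by (simp add: W2_def)
      ultimately have "W1 \<noteq> W2" by blast
      then show ?thesis using w1 w2 by (intro exI[of _ "{W1, W2}"]) auto
    next
      case False
      then have qb: "b + e + 1 \<le> q" using q1 by simp
      define W2 where "W2 = drop (h n - (q - b)) (W n) @ replicate b 1"
      have l2: "q - b \<le> h n" using q1 abc by simp
      have w2: "W2 \<in> Lq q" "Lang (W2 @ [0])" "Lang (W2 @ [1])"
        using RSword[OF n abc(2,3,5) l2] qb unfolding W2_def by auto
      have "e < q - b" using qb by simp
      then obtain P2 where P2: "drop (h n - (q - b)) (W n) = P2 @ [0] @ replicate e 1"
        using drop_end[OF n _ l2] by blast
      have f2: "W2 = P2 @ [0] @ replicate (e + b) 1" by (simp add: W2_def P2 replicate_add)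
      have "W1 \<noteq> W2"
      proof
        assume "W1 = W2"
        then have "rev W1 = rev W2" by simp
        then have "replicate (e + a) 1 @ 0 # rev P1 = replicate (e + b) 1 @ 0 # rev P2"
          using f1 f2 by simp
        then have "e + a = e + b" by (rule rep_neq)
        then show False using abc by simp
      qed
      then show ?thesis using w1 w2 by (intro exI[of _ "{W1, W2}"]) auto
    qed
  qed
  then have "2 * card {i\<in>G. i < a + h n} \<le> card (Lq (a + h n))" by (rule count_total)
  moreover have "{i\<in>G. i < a + h n} = G" by (auto simp: G_def)
  moreover have "h n - e - 1 - e \<le> card G"
  proof -
    have "card {a+e+1..<a+h n} - card {c..<b+e+1} \<le> card G"
      unfolding G_def by (rule diff_card_le_card_Diff) simp
    moreover have "card {c..<b+e+1} \<le> e" using abc by simp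
    ultimately show ?thesis by simp
  qed
  ultimately show ?thesis by simp
qed

end


lemma h_ge: "n \<le> h n"
proof (induction n)
  case 0 then show ?case by simp
next
  case (Suc n)
  show ?case
  proof (cases "n = 0")
    case True then show ?thesis using h_pos[of 1] by simp
  next
    case False
    then have "h (Suc n) \<ge> 2 * h n" using W_len[of n] by simp
    then show ?thesis using Suc h_pos[of n] by simp
  qed
qed

end



lemma three_sort:
  fixes a0 x y z :: nat
  assumes "x \<noteq> y" "x \<noteq> z" "y \<noteq> z" "a0 \<le> x" "a0 \<le> y" "a0 \<le> z"
  shows "\<exists>b c. b \<in> {x,y,z} \<and> c \<in> {x,y,z} \<and> a0 < b \<and> b < c"
proof (cases "x < y")
  case xy: True
  show ?thesis
  proof (cases "y < z")
    case True then show ?thesis using xy assms by (intro exI[of _ y] exI[of _ z]) simp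
  next
    case zy: False
    show ?thesis
    proof (cases "x < z")
      case True then show ?thesis using xy zy assms by (intro exI[of _ z] exI[of _ y]) simp
    next
      case False then show ?thesis using xy zy assms by (intro exI[of _ x] exI[of _ y]) simp
    qed
  qed
next
  case yx: False
  show ?thesis
  proof (cases "x < z")
    case True then show ?thesis using yx assms by (intro exI[of _ x] exI[of _ z]) simp
  next
    case zx: False
    show ?thesis
    proof (cases "y < z")
      case True then show ?thesis using yx zx assms by (intro exI[of _ z] exI[of _ x]) simp
    next
      case False then show ?thesis using yx zx assms by (intro exI[of _ y] exI[of _ x]) simp
    qed
  qed
qed

lemma final:
  fixes r :: "nat \<Rightarrow> nat" and s :: "nat \<Rightarrow> nat \<Rightarrow> nat"
  assumes cut_pos: "\<forall>n\<ge>1. r n \<ge> 1"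
    and fin: "rk_finite_measure r s"
    and last_zero: "\<exists>N. \<forall>n\<ge>N. s n (r n) = 0"
    and three: "infinite {n. n \<ge> 1 \<and>
        (\<exists>a b c. a \<noteq> b \<and> a \<noteq> c \<and> b \<noteq> c \<and>
           a \<in> {s m i | m i. m \<ge> n \<and> i < r m} \<and>
           b \<in> {s m i | m i. m \<ge> n \<and> i < r m} \<and>
           c \<in> {s m i | m i. m \<ge> n \<and> i < r m})}"
  shows "limsup (\<lambda>q. ereal (real (complexity r s q) / real q)) \<ge> 2"
proof -
  interpret rk r s using cut_pos by unfold_locales
  obtain N0 where N0: "\<forall>n\<ge>N0. s n (r n) = 0" using last_zero by blast
  define N where "N = max N0 1"
  have N1: "N \<ge> 1" and lastz: "\<forall>k\<ge>N. s k (r k) = 0" using N0 by (auto simp: N_def)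
  have "0 \<in> set (W N)" using W_start[of N] by auto
  then obtain P e where Pe: "W N = P @ [0] @ replicate e 1" using ends0 W_set by blast
  have Nend: "\<exists>P. W N = P @ [0] @ replicate e 1" using Pe by blast
  let ?S = "S"
  define A where "A n = (LEAST v. v \<in> ?S n)" for n
  define tn where "tn n = real (\<Sum>i\<le>r n. s n i) / (real (r n) * real (h n))" for n
  define C where "C = real (4 * e + 2)"
  define SS where "SS n = {s m i | m i. m \<ge> n \<and> i < r m}" for n
  have SSS: "SS n = S n" for n unfolding SS_def S_def[OF N1 lastz Nend] ..
  have three': "infinite {n. n \<ge> 1 \<and> (\<exists>a b c. a \<noteq> b \<and> a \<noteq> c \<and> b \<noteq> c \<and>
         a \<in> SS n \<and> b \<in> SS n \<and> c \<in> SS n)}"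
    unfolding SS_def by (rule three)
  define T where "T = {n. n \<ge> 1 \<and> (\<exists>a b c. a \<noteq> b \<and> a \<noteq> c \<and> b \<noteq> c \<and>
         a \<in> SS n \<and> b \<in> SS n \<and> c \<in> SS n)}"
  have "infinite T" unfolding T_def by (rule three')

  have key: "2 * real (h n) - C \<le> real (complexity r s (A n + h n)) \<and> real (A n) \<le> tn n * real (h n)"
    if n: "N \<le> n" for n
  proof -
    from \<open>infinite T\<close> obtain n' where n'1: "n' \<ge> n" and n'2: "n' \<in> T"
      unfolding infinite_nat_iff_unbounded_le by blast
    have "\<exists>a b c. a \<noteq> b \<and> a \<noteq> c \<and> b \<noteq> c \<and> a \<in> SS n' \<and> b \<in> SS n' \<and> c \<in> SS n'"
      using n'2 by (simp only: T_def mem_Collect_eq)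
    then obtain x y z where xyz0: "x \<noteq> y" "x \<noteq> z" "y \<noteq> z" "x \<in> SS n'" "y \<in> SS n'" "z \<in> SS n'"
      by blast
    have sub: "SS n' \<subseteq> SS n"
    proof
      fix v assume "v \<in> SS n'"
      then obtain m i where "v = s m i" "n' \<le> m" "i < r m" unfolding SS_def by blast
      then show "v \<in> SS n" using n'1 unfolding SS_def by (intro CollectI exI[of _ m] exI[of _ i]) simp
    qed
    have xyz: "x \<noteq> y" "x \<noteq> z" "y \<noteq> z" "x \<in> ?S n" "y \<in> ?S n" "z \<in> ?S n"
      using xyz0 sub SSS by auto
    have A_in: "A n \<in> ?S n" unfolding A_def using xyz(4) by (rule LeastI)
    have A_le: "A n \<le> v" if "v \<in> ?S n" for v unfolding A_def using that by (rule Least_le)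
    obtain b c where bc: "b \<in> ?S n" "c \<in> ?S n" "A n < b" "b < c"
      using three_sort[OF xyz(1-3) A_le[OF xyz(4)] A_le[OF xyz(5)] A_le[OF xyz(6)]] xyz(4-6) by blast
    have "2 * (h n - e - 1 - e) \<le> card (Lq (A n + h n))"
      by (rule main_count[OF N1 lastz Nend n A_in bc])
    then have "2 * (h n - e - 1 - e) \<le> complexity r s (A n + h n)"
      using Lq_le_complexity[of "A n + h n"] by linarith
    then have c1: "2 * real (h n) - C \<le> real (complexity r s (A n + h n))"
      unfolding C_def by linarith
    have rn: "r n \<ge> 1" using cut_pos n N1 by simp
    have "real (r n) * real (A n) = (\<Sum>i<r n. real (A n))" by simp
    also have "\<dots> \<le> (\<Sum>i<r n. real (s n i))"
      by (rule sum_mono) (use A_le n in \<open>auto simp: S_def[OF N1 lastz Nend]\<close>)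
    also have "\<dots> \<le> (\<Sum>i\<le>r n. real (s n i))" by (rule sum_mono2) auto
    finally have "real (r n) * real (A n) \<le> real (\<Sum>i\<le>r n. s n i)" by simp
    then have "real (A n) \<le> tn n * real (h n)"
      using rn h_pos[of n] unfolding tn_def by (simp add: field_simps)
    then show ?thesis using c1 by simp
  qed
  have t0: "tn \<longlonglongrightarrow> 0"
  proof -
    have "(\<lambda>n. if n \<ge> 1 then tn n else 0) \<longlonglongrightarrow> 0"
      using summable_LIMSEQ_zero fin unfolding rk_finite_measure_def tn_def by blast
    moreover have "eventually (\<lambda>n. (if n \<ge> 1 then tn n else 0) = tn n) sequentially"
      using eventually_ge_at_top[of 1] by eventually_elim simp
    ultimately show ?thesis using Lim_transform_eventually by blast
  qed
  have hinf: "filterlim (\<lambda>n. real (h n)) at_top sequentially"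
    by (rule filterlim_at_top_mono[OF filterlim_real_sequentially]) (simp add: h_ge)
  define g where "g n = (2 - C / real (h n)) / (1 + tn n)" for n
  have g2: "g \<longlonglongrightarrow> 2"
  proof -
    have "(\<lambda>n. C / real (h n)) \<longlonglongrightarrow> 0" by (rule tendsto_divide_0[OF tendsto_const filterlim_at_top_imp_at_infinity[OF hinf]])
    then have "(\<lambda>n. (2 - C / real (h n)) / (1 + tn n)) \<longlonglongrightarrow> (2 - 0) / (1 + 0)"
      by (intro tendsto_intros t0) auto
    then show ?thesis unfolding g_def[abs_def] by simp
  qed
  have ratio: "g n \<le> real (complexity r s (A n + h n)) / real (A n + h n)"
    if n: "N \<le> n" "C \<le> 2 * real (h n)" "tn n \<ge> 0" for n
  proof -
    have k: "2 * real (h n) - C \<le> real (complexity r s (A n + h n))" "real (A n) \<le> tn n * real (h n)"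
      using key[OF n(1)] by auto
    have hp: "real (h n) > 0" using h_pos[of n] by simp
    have Qp: "real (A n + h n) > 0" using hp by simp
    have Qle: "real (A n + h n) \<le> (1 + tn n) * real (h n)" using k(2) by (simp add: algebra_simps)
    have "g n = (2 * real (h n) - C) / ((1 + tn n) * real (h n))"
      unfolding g_def using hp by (simp add: field_simps)
    also have "\<dots> \<le> (2 * real (h n) - C) / real (A n + h n)"
      by (rule divide_left_mono) (use n Qle Qp in auto)
    also have "\<dots> \<le> real (complexity r s (A n + h n)) / real (A n + h n)"
      by (rule divide_right_mono) (use k Qp in auto)
    finally show ?thesis .
  qed
  show ?thesis
  proof (rule ccontr)
    assume "\<not> 2 \<le> limsup (\<lambda>q. ereal (real (complexity r s q) / real q))"
    then have "limsup (\<lambda>q. ereal (real (complexity r s q) / real q)) < 2" by simp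
    then obtain z where z: "limsup (\<lambda>q. ereal (real (complexity r s q) / real q)) < ereal z" "ereal z < 2"
      using ereal_dense2 by blast
    have "eventually (\<lambda>q. ereal (real (complexity r s q) / real q) < ereal z) sequentially"
      using Limsup_lessD[OF z(1)] .
    then obtain M where M: "\<And>q. q \<ge> M \<Longrightarrow> real (complexity r s q) / real q < z"
      unfolding eventually_sequentially by auto
    have "z < 2" using z(2) by simp
    then have ev1: "eventually (\<lambda>n. z < g n) sequentially" using g2 order_tendstoD(1) by blast
    have "eventually (\<lambda>n. C \<le> real (h n)) sequentially"
      using hinf unfolding filterlim_at_top by blast
    then have ev2: "eventually (\<lambda>n. C \<le> 2 * real (h n)) sequentially"
      by eventually_elim simp
    have ev3: "eventually (\<lambda>n. tn n \<ge> 0) sequentially"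
      using eventually_True by (rule eventually_mono) (simp add: tn_def sum_nonneg)
    have "eventually (\<lambda>n. N \<le> n \<and> M \<le> n) sequentially"
      using eventually_ge_at_top[of "max N M"] by eventually_elim simp
    then have "eventually (\<lambda>n. z < g n \<and> C \<le> 2 * real (h n) \<and> tn n \<ge> 0 \<and> N \<le> n \<and> M \<le> n) sequentially"
      using ev1 ev2 ev3 by eventually_elim simp
    then obtain n where n: "z < g n" "C \<le> 2 * real (h n)" "tn n \<ge> 0" "N \<le> n" "M \<le> n"
      unfolding eventually_sequentially by blast
    have "M \<le> A n + h n" using n(5) h_ge[of n] by simp
    then have "real (complexity r s (A n + h n)) / real (A n + h n) < z" by (rule M)
    moreover have "g n \<le> real (complexity r s (A n + h n)) / real (A n + h n)"
      using ratio n by blast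
    ultimately show False using n(1) by simp
  qed
qed


theorem proposition2p5:
  fixes r :: "nat \<Rightarrow> nat" and s :: "nat \<Rightarrow> nat \<Rightarrow> nat"
  assumes cut_pos: "\<forall>n\<ge>1. r n \<ge> 1"
    and fin: "rk_finite_measure r s"
    and last_zero: "\<exists>N. \<forall>n\<ge>N. s n (r n) = 0"
    and three: "infinite {n. n \<ge> 1 \<and>
        (\<exists>a b c. a \<noteq> b \<and> a \<noteq> c \<and> b \<noteq> c \<and>
           a \<in> {s m i | m i. m \<ge> n \<and> i < r m} \<and>
           b \<in> {s m i | m i. m \<ge> n \<and> i < r m} \<and>
           c \<in> {s m i | m i. m \<ge> n \<and> i < r m})}"
  shows "limsup (\<lambda>q. ereal (real (complexity r s q) / real q)) \<ge> 2"
  by (rule final[OF cut_pos fin last_zero three])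

end
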